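(* Let $A$ be a nonempty finite set with $|A|=n$, let $\Sigma\in\mathbb{R}$, and let $d$ be a metric on $A$. Then the function $\sigma:A^2\to\mathbb{R}$ defined by $$\sigma(x,y)=d(x,\cdot)+d(y,\cdot)-d(x,y)-d(\cdot,\cdot)+\frac{\Sigma}{n}$$ is a $\Sigma$-proximity on $A$.
   Context: A metric on $A$ is a function $d:A^2\to\mathbb{R}$ such that for all $x,y,z\in A$: $d(x,y)=0$ iff $x=y$, and $d(x,y)+d(x,z)-d(y,z)\ge 0$. Notation: $d(x,\cdot)=\frac1n\sum_{t\in A}d(x,t)$ and $d(\cdot,\cdot)=\frac1{n^2}\sum_{s,t\in A}d(s,t)$. For a real number $\Sigma$, a function $\sigma:A^2\to\mathbb{R}$ is a $\Sigma$-proximity on $A$ if for all $x,y,z\in A$: (1) $\sum_{t\in A}\sigma(x,t)=\Sigma$; (2) $\sigma(x,y)+\sigma(x,z)-\sigma(y,z)\le\sigma(x,x)$, with strict inequality whenever $z=y$ and $x\ne y$. *)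

theory Defs
  imports Complex_Main
begin

definition metric_on :: "'a set \<Rightarrow> ('a \<Rightarrow> 'a \<Rightarrow> real) \<Rightarrow> bool" where
  "metric_on A d \<longleftrightarrow>
     (\<forall>x\<in>A. \<forall>y\<in>A. d x y = 0 \<longleftrightarrow> x = y) \<and>
     (\<forall>x\<in>A. \<forall>y\<in>A. \<forall>z\<in>A. d x y + d x z - d y z \<ge> 0)"

definition avg_dist :: "'a set \<Rightarrow> ('a \<Rightarrow> 'a \<Rightarrow> real) \<Rightarrow> 'a \<Rightarrow> real" where
  "avg_dist A d x = (\<Sum>t\<in>A. d x t) / real (card A)"

definition avg_all :: "'a set \<Rightarrow> ('a \<Rightarrow> 'a \<Rightarrow> real) \<Rightarrow> real" where
  "avg_all A d = (\<Sum>s\<in>A. \<Sum>t\<in>A. d s t) / (real (card A))^2"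

definition proximity_on :: "real \<Rightarrow> 'a set \<Rightarrow> ('a \<Rightarrow> 'a \<Rightarrow> real) \<Rightarrow> bool" where
  "proximity_on \<Sigma> A \<sigma> \<longleftrightarrow>
     (\<forall>x\<in>A. (\<Sum>t\<in>A. \<sigma> x t) = \<Sigma>) \<and>
     (\<forall>x\<in>A. \<forall>y\<in>A. \<forall>z\<in>A. \<sigma> x y + \<sigma> x z - \<sigma> y z \<le> \<sigma> x x) \<and>
     (\<forall>x\<in>A. \<forall>y\<in>A. x \<noteq> y \<longrightarrow> \<sigma> x y + \<sigma> x y - \<sigma> y y < \<sigma> x x)"

end

theory Submission
  imports Defs
begin

theorem proposition2:
  fixes A :: "'a set" and \<Sigma> :: real and d :: "'a \<Rightarrow> 'a \<Rightarrow> real"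
  assumes "finite A" and "A \<noteq> {}"
    and "metric_on A d"
  shows "proximity_on \<Sigma> A
           (\<lambda>x y. avg_dist A d x + avg_dist A d y - d x y - avg_all A d
                  + \<Sigma> / real (card A))"
proof -
  define n where "n = real (card A)"
  have c0: "card A > 0" using assms(1,2) card_gt_0_iff by blast
  have n0: "n > 0" using c0 unfolding n_def by simp
  have M1: "\<forall>x\<in>A. \<forall>y\<in>A. d x y = 0 \<longleftrightarrow> x = y" and M2: "\<forall>x\<in>A. \<forall>y\<in>A. \<forall>z\<in>A. d x y + d x z - d y z \<ge> 0"
    using assms(3) unfolding metric_on_def by (rule conjunct1, rule conjunct2)
  have dxx: "\<And>x. x \<in> A \<Longrightarrow> d x x = 0" using M1 by blast
  have tri: "\<And>x y z. x \<in> A \<Longrightarrow> y \<in> A \<Longrightarrow> z \<in> A \<Longrightarrow> d x y + d x z - d y z \<ge> 0"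
    using M2 by blast
  have nz: "\<And>x y. x \<in> A \<Longrightarrow> y \<in> A \<Longrightarrow> x \<noteq> y \<Longrightarrow> d x y \<noteq> 0"
    using M1 by blast
  have sum: "(\<Sum>t\<in>A. avg_dist A d x + avg_dist A d t - d x t - avg_all A d + \<Sigma> / real (card A)) = \<Sigma>"
    if "x \<in> A" for x
  proof -
    have "(\<Sum>t\<in>A. avg_dist A d x + avg_dist A d t - d x t - avg_all A d + \<Sigma> / real (card A))
      = n * avg_dist A d x + (\<Sum>t\<in>A. avg_dist A d t) - (\<Sum>t\<in>A. d x t) - n * avg_all A d + n * (\<Sigma> / n)"
      by (simp add: sum.distrib sum_subtractf n_def)
    also have "n * avg_dist A d x = (\<Sum>t\<in>A. d x t)" using n0 by (simp add: avg_dist_def n_def)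
    also have "(\<Sum>t\<in>A. avg_dist A d t) = (\<Sum>s\<in>A. \<Sum>t\<in>A. d s t) / n"
      by (simp add: avg_dist_def n_def sum_divide_distrib)
    also have "n * avg_all A d = (\<Sum>s\<in>A. \<Sum>t\<in>A. d s t) / n"
      using n0 by (simp add: avg_all_def n_def power2_eq_square)
    finally show ?thesis using n0 by simp
  qed
  show ?thesis
    unfolding proximity_on_def
  proof (intro conjI ballI impI)
    fix x assume "x \<in> A" then show "(\<Sum>t\<in>A. avg_dist A d x + avg_dist A d t - d x t - avg_all A d + \<Sigma> / real (card A)) = \<Sigma>"
      by (rule sum)
  next
    fix x y z assume h: "x \<in> A" "y \<in> A" "z \<in> A"
    show "avg_dist A d x + avg_dist A d y - d x y - avg_all A d + \<Sigma> / real (card A) +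
         (avg_dist A d x + avg_dist A d z - d x z - avg_all A d + \<Sigma> / real (card A)) -
         (avg_dist A d y + avg_dist A d z - d y z - avg_all A d + \<Sigma> / real (card A))
         \<le> avg_dist A d x + avg_dist A d x - d x x - avg_all A d + \<Sigma> / real (card A)"
      using tri[OF h] dxx[OF h(1)] by simp
  next
    fix x y assume h: "x \<in> A" "y \<in> A" "x \<noteq> y"
    have "d x y + d x y - d y y \<ge> 0" using tri h by blast
    hence "d x y > 0" using nz[OF h] dxx[OF h(2)] by simp
    then show "avg_dist A d x + avg_dist A d y - d x y - avg_all A d + \<Sigma> / real (card A) +
         (avg_dist A d x + avg_dist A d y - d x y - avg_all A d + \<Sigma> / real (card A)) -
         (avg_dist A d y + avg_dist A d y - d y y - avg_all A d + \<Sigma> / real (card A))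
         < avg_dist A d x + avg_dist A d x - d x x - avg_all A d + \<Sigma> / real (card A)"
      using dxx h by simp
  qed
qed

end
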